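(* Let $M=(Q,\mathcal{A},\Delta,I,F)$ be a complete symbolic finite automaton. Let $n=|Q|$, $m=|\Delta|$, $k$ the size of the largest predicate used in $\Delta$, $m_q$ the number of transitions of $\Delta$ leaving $q$ for each $q\in Q$, and $\hat m=\max\{m_q\mid q\in Q\}$. Then the algorithm LocalSim described in the context computes $\preceq_M$ in time $$O\Big(n\sum_{q\in Q} m_q 2^{m_q} + m\,\mathcal{C}_{sat}(\hat m,k)\sum_{q\in Q}2^{m_q}\Big).$$
   Context: An effective Boolean algebra is $\mathcal{A}=(\mathfrak{D},\mathbb{P},[\![\cdot]\!],\vee,\wedge,\neg)$ where $\mathbb{P}$ is a set of predicates closed under $\vee,\wedge,\neg$, with an interpretation $[\![\cdot]\!]:\mathbb{P}\to 2^{\mathfrak{D}}$ mapping $\vee,\wedge,\neg$ to union, intersection and complement w.r.t. $\mathfrak{D}$; $\mathit{IsSat}(\varphi)$ means $[\![\varphi]\!]\neq\emptyset$, and the operations and $\mathit{IsSat}$ are computable. Predicates have a measurable size; $\mathcal{C}_{sat}(x,y)$ denotes the worst-case complexity of constructing a predicate obtained by applying $x$ operations of $\mathcal{A}$ to predicates of size at most $y$ and checking its satisfiability. An SFA is $M=(Q,\mathcal{A},\Delta,I,F)$ with finite state set $Q$, finite transition relation $\Delta\subseteq Q\times\mathbb{P}\times Q$ whose predicates are satisfiable, initial states $I$, final states $F$; its concrete transitions are $[\![\Delta]\!]=\{(q,a,p)\mid (q,\psi,p)\in\Delta, a\in[\![\psi]\!]\}$. $M$ is complete if for every $q\in Q$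 and $a\in\mathfrak{D}$ there is $p$ with $(q,a,p)\in[\![\Delta]\!]$. A relation $S\subseteq Q\times Q$ is a simulation on $M$ if whenever $(p,r)\in S$: $p\in F$ implies $r\in F$, and for all $a\in\mathfrak{D}$ and $(p,a,p')\in[\![\Delta]\!]$ there is $(r,a,r')\in[\![\Delta]\!]$ with $(p',r')\in S$; $\preceq_M$ is the unique maximal simulation. The minterms $\mathrm{Minterms}(\Phi)$ of a finite set $\Phi$ of predicates are the satisfiable predicates among $\{\bigwedge_{\phi\in\Phi'}\phi\wedge\bigwedge_{\phi\in\Phi\setminus\Phi'}\neg\phi\mid\Phi'\subseteq\Phi\}$. For $p\in Q$ let $\mathbb{P}_{\Delta,p}$ be the set of predicates on transitions of $\Delta$ leaving $p$. The locally mintermised form $\Delta_L$ of $\Delta$ is obtained by replacing each $(p,\varphi,q)\in\Delta$ by $\{(p,\omega,q)\mid\omega\in\mathrm{Minterms}(\mathbb{P}_{\Delta,p}),\ \mathit{IsSat}(\omega\wedge\varphi)\}$. Algorithm LocalSim (input: a complete SFA $M$): 1. Compute $\Delta_L$. 2. For all $p,q\in Q$ and every transition $(q,\psi,t)\in\Delta_L$, set a counter $N_\psi(q,p):=|\{r\mid (q,\psi,r)\in\Delta_L\}|$. 3. Set $\mathit{Sim}:=Q\times Q$ and $\mathit{NotSim}:=F\times(Q\setminus F)$. 4. While $\mathit{NotSim}\neq\emptyset$: remove some $(i,j)$ from $\mathit{NotSim}$ and from $\mathit{Sim}$; for every transition $(t,\psi_{tj},j)\in\Delta_L$: decrement $N_{\psi_{tj}}(t,i)$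 by one, and if it becomes $0$, then for every transition $(s,\varphi_{si},i)\in\Delta$ with $(s,t)\in\mathit{Sim}$, if $\mathit{IsSat}(\psi_{tj}\wedge\varphi_{si})$ then add $(s,t)$ to $\mathit{NotSim}$. 5. Return $\mathit{Sim}$. *)

theory Defs
  imports Main "HOL-Library.Extended_Nat"
begin

datatype 'p bform = Lit bool 'p | AndF "'p bform" "'p bform" | OrF "'p bform" "'p bform"
  | NotF "'p bform"

fun fsem :: "('p \<Rightarrow> 'd set) \<Rightarrow> 'p bform \<Rightarrow> 'd set" where
  "fsem sem (Lit b p) = (if b then sem p else - sem p)"
| "fsem sem (AndF f g) = fsem sem f \<inter> fsem sem g"
| "fsem sem (OrF f g) = fsem sem f \<union> fsem sem g"
| "fsem sem (NotF f) = - fsem sem f"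

definition IsSat :: "('p \<Rightarrow> 'd set) \<Rightarrow> 'p bform \<Rightarrow> bool" where
  "IsSat sem f \<longleftrightarrow> fsem sem f \<noteq> {}"

fun nops :: "'p bform \<Rightarrow> nat" where
  "nops (Lit b p) = 0"
| "nops (AndF f g) = Suc (nops f + nops g)"
| "nops (OrF f g) = Suc (nops f + nops g)"
| "nops (NotF f) = Suc (nops f)"

fun batoms :: "'p bform \<Rightarrow> 'p set" where
  "batoms (Lit b p) = {p}"
| "batoms (AndF f g) = batoms f \<union> batoms g"
| "batoms (OrF f g) = batoms f \<union> batoms g"
| "batoms (NotF f) = batoms f"

text \<open>C_sat(x,y): worst-case cost (given the cost function qcost of constructing a
  Boolean combination and checking its satisfiability) over all predicates obtained by
  applying at most x operations to predicates of size at most y.\<close>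
definition Csat :: "('p \<Rightarrow> nat) \<Rightarrow> ('p bform \<Rightarrow> nat) \<Rightarrow> nat \<Rightarrow> nat \<Rightarrow> enat" where
  "Csat sz qcost x y =
     (SUP f \<in> {f. nops f \<le> x \<and> (\<forall>p\<in>batoms f. sz p \<le> y)}. enat (qcost f))"

definition sfa :: "('p \<Rightarrow> 'd set) \<Rightarrow> 'q set \<Rightarrow> ('q \<times> 'p \<times> 'q) set \<Rightarrow> 'q set \<Rightarrow> 'q set \<Rightarrow> bool" where
  "sfa sem Q Delta I F \<longleftrightarrow> finite Q \<and> finite Delta \<and>
     (\<forall>(q, \<phi>, p) \<in> Delta. q \<in> Q \<and> p \<in> Q \<and> sem \<phi> \<noteq> {}) \<and> I \<subseteq> Q \<and> F \<subseteq> Q"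

definition ctrans :: "('p \<Rightarrow> 'd set) \<Rightarrow> ('q \<times> 'p \<times> 'q) set \<Rightarrow> ('q \<times> 'd \<times> 'q) set" where
  "ctrans sem Delta = {(q, a, p). \<exists>\<phi>. (q, \<phi>, p) \<in> Delta \<and> a \<in> sem \<phi>}"

definition complete_sfa :: "('p \<Rightarrow> 'd set) \<Rightarrow> 'q set \<Rightarrow> ('q \<times> 'p \<times> 'q) set \<Rightarrow> bool" where
  "complete_sfa sem Q Delta \<longleftrightarrow> (\<forall>q\<in>Q. \<forall>a. \<exists>p. (q, a, p) \<in> ctrans sem Delta)"

definition is_simulation ::
  "('p \<Rightarrow> 'd set) \<Rightarrow> 'q set \<Rightarrow> ('q \<times> 'p \<times> 'q) set \<Rightarrow> 'q set \<Rightarrow> ('q \<times> 'q) set \<Rightarrow> bool" where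
  "is_simulation sem Q Delta F S \<longleftrightarrow> S \<subseteq> Q \<times> Q \<and>
     (\<forall>(p, r) \<in> S. (p \<in> F \<longrightarrow> r \<in> F) \<and>
        (\<forall>a p'. (p, a, p') \<in> ctrans sem Delta \<longrightarrow>
                (\<exists>r'. (r, a, r') \<in> ctrans sem Delta \<and> (p', r') \<in> S)))"

definition max_sim :: "('p \<Rightarrow> 'd set) \<Rightarrow> 'q set \<Rightarrow> ('q \<times> 'p \<times> 'q) set \<Rightarrow> 'q set \<Rightarrow> ('q \<times> 'q) set" where
  "max_sim sem Q Delta F =
     (THE S. is_simulation sem Q Delta F S \<and> (\<forall>S'. is_simulation sem Q Delta F S' \<longrightarrow> S' \<subseteq> S))"

definition Pout :: "('q \<times> 'p \<times> 'q) set \<Rightarrow> 'q \<Rightarrow> 'p set" where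
  "Pout Delta q = {\<phi>. \<exists>p. (q, \<phi>, p) \<in> Delta}"

definition out_deg :: "('q \<times> 'p \<times> 'q) set \<Rightarrow> 'q \<Rightarrow> nat" where
  "out_deg Delta q = card {t \<in> Delta. fst t = q}"

fun conj_list :: "'p bform list \<Rightarrow> 'p bform" where
  "conj_list [] = Lit True undefined"
| "conj_list [l] = l"
| "conj_list (l # ls) = AndF l (conj_list ls)"

definition plist :: "('q \<times> 'p \<times> 'q) set \<Rightarrow> 'q \<Rightarrow> 'p list" where
  "plist Delta q = (SOME xs. set xs = Pout Delta q \<and> distinct xs)"

definition mt_form :: "('q \<times> 'p \<times> 'q) set \<Rightarrow> 'q \<Rightarrow> 'p set \<Rightarrow> 'p bform" where
  "mt_form Delta q Phi' = conj_list (map (\<lambda>\<phi>. Lit (\<phi> \<in> Phi') \<phi>) (plist Delta q))"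

text \<open>local minterms at q, identified by the set of positively occurring predicates\<close>
definition minterms_at :: "('p \<Rightarrow> 'd set) \<Rightarrow> ('q \<times> 'p \<times> 'q) set \<Rightarrow> 'q \<Rightarrow> 'p set set" where
  "minterms_at sem Delta q = {Phi'. Phi' \<subseteq> Pout Delta q \<and> IsSat sem (mt_form Delta q Phi')}"

definition DeltaL :: "('p \<Rightarrow> 'd set) \<Rightarrow> ('q \<times> 'p \<times> 'q) set \<Rightarrow> ('q \<times> 'p set \<times> 'q) set" where
  "DeltaL sem Delta = {(p, Phi', q). \<exists>\<phi>. (p, \<phi>, q) \<in> Delta \<and> Phi' \<in> minterms_at sem Delta p \<and>
       IsSat sem (AndF (mt_form Delta p Phi') (Lit True \<phi>))}"

record ('q, 'p) ls_state =
  Sim :: "('q \<times> 'q) set"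
  NotSim :: "('q \<times> 'q) set"
  Cnt :: "'q \<Rightarrow> 'p set \<Rightarrow> 'q \<Rightarrow> nat"
  cost :: nat

text \<open>cost of step 1 (computing Delta_L): enumerating all subsets of predicates leaving q,
  building and checking each candidate minterm, and checking omega /\ phi for every
  transition leaving q and every minterm omega at q\<close>
definition step1_cost ::
  "('p \<Rightarrow> 'd set) \<Rightarrow> ('p bform \<Rightarrow> nat) \<Rightarrow> 'q set \<Rightarrow> ('q \<times> 'p \<times> 'q) set \<Rightarrow> nat" where
  "step1_cost sem qcost Q Delta =
    (\<Sum>q\<in>Q. (\<Sum>Phi'\<in>Pow (Pout Delta q). card (Pout Delta q) + qcost (mt_form Delta q Phi'))
      + (\<Sum>t\<in>{t \<in> Delta. fst t = q}. \<Sum>Phi'\<in>minterms_at sem Delta q.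
             1 + qcost (AndF (mt_form Delta q Phi') (Lit True (fst (snd t))))))"

definition ls_init ::
  "('p \<Rightarrow> 'd set) \<Rightarrow> ('p bform \<Rightarrow> nat) \<Rightarrow> 'q set \<Rightarrow> ('q \<times> 'p \<times> 'q) set \<Rightarrow> 'q set
     \<Rightarrow> ('q, 'p) ls_state" where
  "ls_init sem qcost Q Delta F =
    \<lparr> Sim = Q \<times> Q,
      NotSim = F \<times> (Q - F),
      Cnt = (\<lambda>q \<psi> p. card {r. (q, \<psi>, r) \<in> DeltaL sem Delta}),
      cost = step1_cost sem qcost Q Delta
             + (card (DeltaL sem Delta) + card Q * card {(q, \<psi>). \<exists>t. (q, \<psi>, t) \<in> DeltaL sem Delta})
             + (card Q * card Q + card (F \<times> (Q - F))) \<rparr>"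

definition ls_process ::
  "('p \<Rightarrow> 'd set) \<Rightarrow> ('p bform \<Rightarrow> nat) \<Rightarrow> ('q \<times> 'p \<times> 'q) set \<Rightarrow> 'q \<times> 'q
     \<Rightarrow> ('q, 'p) ls_state \<Rightarrow> ('q, 'p) ls_state" where
  "ls_process sem qcost Delta ij st =
    (let i = fst ij; j = snd ij;
         Sim' = Sim st - {ij};
         decs = {(t, \<psi>). (t, \<psi>, j) \<in> DeltaL sem Delta};
         N' = (\<lambda>t \<psi> p. if p = i \<and> (t, \<psi>) \<in> decs then Cnt st t \<psi> p - 1 else Cnt st t \<psi> p);
         new = {(s, t). \<exists>\<psi> \<phi>. (t, \<psi>) \<in> decs \<and> N' t \<psi> i = 0 \<and> (s, \<phi>, i) \<in> Delta \<and>
                   (s, t) \<in> Sim' \<and> IsSat sem (AndF (mt_form Delta t \<psi>) (Lit True \<phi>))};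
         c = 1 + (\<Sum>(t, \<psi>)\<in>decs. 1 +
               (if N' t \<psi> i = 0 then
                  (\<Sum>x\<in>{x \<in> Delta. snd (snd x) = i}.
                     1 + (if (fst x, t) \<in> Sim' then qcost (AndF (mt_form Delta t \<psi>) (Lit True (fst (snd x))))
                          else 0))
                else 0))
     in \<lparr> Sim = Sim', NotSim = (NotSim st - {ij}) \<union> new, Cnt = N', cost = cost st + c \<rparr>)"

definition ls_step ::
  "('p \<Rightarrow> 'd set) \<Rightarrow> ('p bform \<Rightarrow> nat) \<Rightarrow> ('q \<times> 'p \<times> 'q) set
     \<Rightarrow> ('q, 'p) ls_state \<Rightarrow> ('q, 'p) ls_state \<Rightarrow> bool" where
  "ls_step sem qcost Delta st st' \<longleftrightarrow> (\<exists>ij \<in> NotSim st. st' = ls_process sem qcost Delta ij st)"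

definition ls_reach ::
  "('p \<Rightarrow> 'd set) \<Rightarrow> ('p bform \<Rightarrow> nat) \<Rightarrow> 'q set \<Rightarrow> ('q \<times> 'p \<times> 'q) set \<Rightarrow> 'q set
     \<Rightarrow> ('q, 'p) ls_state \<Rightarrow> bool" where
  "ls_reach sem qcost Q Delta F st \<longleftrightarrow> (ls_step sem qcost Delta)\<^sup>*\<^sup>* (ls_init sem qcost Q Delta F) st"

end

theory Submission
  imports Defs
begin

locale lsim =
  fixes sem :: "'p \<Rightarrow> 'd set" and qcost :: "'p bform \<Rightarrow> nat"
    and Q :: "'q set" and Delta :: "('q \<times> 'p \<times> 'q) set" and I F :: "'q set"
  assumes sfa: "sfa sem Q Delta I F" and compl: "complete_sfa sem Q Delta"
begin

lemma finQ: "finite Q" and finD: "finite Delta" and FQ: "F \<subseteq> Q"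
  using sfa by (auto simp: sfa_def)

lemma trans_in: "(q, \<phi>, p) \<in> Delta \<Longrightarrow> q \<in> Q \<and> p \<in> Q"
  using sfa unfolding sfa_def by blast

lemma Pout_eq: "Pout Delta q = (\<lambda>t. fst (snd t)) ` {t \<in> Delta. fst t = q}"
  unfolding Pout_def by force

lemma Pout_fin: "finite (Pout Delta q)"
  unfolding Pout_eq using finD by simp

lemma Pout_card: "card (Pout Delta q) \<le> out_deg Delta q"
  unfolding Pout_eq out_deg_def by (rule card_image_le) (simp add: finD)

lemma Pout_ne: "q \<in> Q \<Longrightarrow> Pout Delta q \<noteq> {}"
  using compl unfolding complete_sfa_def ctrans_def Pout_def by blast

lemma outdeg_pos: "q \<in> Q \<Longrightarrow> 1 \<le> out_deg Delta q"
proof -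
  assume "q \<in> Q"
  then have "Pout Delta q \<noteq> {}" by (rule Pout_ne)
  then have "card (Pout Delta q) > 0" using Pout_fin by (simp add: card_gt_0_iff)
  then show ?thesis using Pout_card[of q] by linarith
qed

lemma plist: "set (plist Delta q) = Pout Delta q \<and> distinct (plist Delta q)"
  unfolding plist_def
  by (rule someI_ex) (use finite_distinct_list[OF Pout_fin[of q]] in blast)

lemma conj_sem: "xs \<noteq> [] \<Longrightarrow> fsem sem (conj_list xs) = (\<Inter>x\<in>set xs. fsem sem x)"
  by (induction xs rule: conj_list.induct) auto

lemma conj_nops: "xs \<noteq> [] \<Longrightarrow> (\<forall>x\<in>set xs. nops x = 0) \<Longrightarrow> nops (conj_list xs) = length xs - 1"
  by (induction xs rule: conj_list.induct) auto

lemma conj_atoms: "xs \<noteq> [] \<Longrightarrow> batoms (conj_list xs) = (\<Union>x\<in>set xs. batoms x)"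
  by (induction xs rule: conj_list.induct) auto

lemma plist_ne: "q \<in> Q \<Longrightarrow> plist Delta q \<noteq> []"
  using plist[of q] Pout_ne[of q] by auto

lemma mt_sem: "q \<in> Q \<Longrightarrow> fsem sem (mt_form Delta q \<Phi>) = {a. \<forall>\<phi>\<in>Pout Delta q. a \<in> sem \<phi> \<longleftrightarrow> \<phi> \<in> \<Phi>}"
  unfolding mt_form_def using plist_ne[of q] plist[of q]
  by (subst conj_sem) auto

lemma mt_nops: "q \<in> Q \<Longrightarrow> nops (mt_form Delta q \<Phi>) = card (Pout Delta q) - 1"
proof -
  assume q: "q \<in> Q"
  have "card (Pout Delta q) = length (plist Delta q)" using plist[of q] by (metis distinct_card)
  then show ?thesis
    unfolding mt_form_def using plist_ne[OF q]
    by (subst conj_nops) auto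
qed

lemma mt_atoms: "q \<in> Q \<Longrightarrow> batoms (mt_form Delta q \<Phi>) = Pout Delta q"
  unfolding mt_form_def using plist_ne[of q] plist[of q]
  by (subst conj_atoms) auto

abbreviation "DL \<equiv> DeltaL sem Delta"

lemma DL_props: "(p, \<Phi>, q) \<in> DL \<Longrightarrow> p \<in> Q \<and> q \<in> Q \<and> \<Phi> \<in> minterms_at sem Delta p \<and> \<Phi> \<subseteq> Pout Delta p"
  unfolding DeltaL_def minterms_at_def using trans_in by blast

definition "Pr = (\<lambda>t. fst (snd t)) ` Delta"

lemma Pr_fin: "finite Pr" unfolding Pr_def using finD by simp

lemma Pout_Pr: "Pout Delta q \<subseteq> Pr" unfolding Pout_def Pr_def by force

lemma DL_fin: "finite DL"
proof -
  have "DL \<subseteq> Q \<times> Pow Pr \<times> Q" using DL_props Pout_Pr by fastforce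
  then show ?thesis using finQ Pr_fin by (meson finite_SigmaI finite_Pow_iff finite_subset)
qed


definition "Dom = {(q, \<psi>). \<exists>r. (q, \<psi>, r) \<in> DL}"
definition "decs j = {(t, \<psi>). (t, \<psi>, j) \<in> DL}"
definition W :: "'q \<times> 'p set \<times> 'q \<Rightarrow> nat" where
  "W = (\<lambda>(t, \<psi>, i). \<Sum>x\<in>{x \<in> Delta. snd (snd x) = i}.
          1 + qcost (AndF (mt_form Delta t \<psi>) (Lit True (fst (snd x)))))"
definition "T S = {(t, \<psi>, i). i \<in> Q \<and> (\<exists>r. (t, \<psi>, r) \<in> DL \<and> (i, r) \<in> S)}"
definition "Pot S = (\<Sum>(i, j)\<in>S. 1 + card (decs j)) + sum W (T S)"
definition "init = ls_init sem qcost Q Delta F"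
definition "C0 = cost init + Pot (Q \<times> Q)"

definition "Nn st i j = (\<lambda>t \<psi> p. if p = i \<and> (t, \<psi>) \<in> decs j then Cnt st t \<psi> p - 1 else Cnt st t \<psi> p)"
definition "newset st i j = {(s, t). \<exists>\<psi> \<phi>. (t, \<psi>) \<in> decs j \<and> Nn st i j t \<psi> i = 0 \<and> (s, \<phi>, i) \<in> Delta \<and>
                   (s, t) \<in> Sim st - {(i, j)} \<and> IsSat sem (AndF (mt_form Delta t \<psi>) (Lit True \<phi>))}"
definition "stepc st i j = 1 + (\<Sum>(t, \<psi>)\<in>decs j. 1 +
               (if Nn st i j t \<psi> i = 0 then
                  (\<Sum>x\<in>{x \<in> Delta. snd (snd x) = i}.
                     1 + (if (fst x, t) \<in> Sim st - {(i, j)} then qcost (AndF (mt_form Delta t \<psi>) (Lit True (fst (snd x))))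
                          else 0))
                else 0))"

lemma proc_eq: "ls_process sem qcost Delta (i, j) st =
  \<lparr> Sim = Sim st - {(i, j)}, NotSim = (NotSim st - {(i, j)}) \<union> newset st i j,
    Cnt = Nn st i j, cost = cost st + stepc st i j \<rparr>"
  unfolding ls_process_def Let_def fst_conv snd_conv Nn_def newset_def stepc_def decs_def by simp

definition Inv :: "('q, 'p) ls_state \<Rightarrow> bool" where
  "Inv st \<longleftrightarrow> NotSim st \<subseteq> Sim st \<and> Sim st \<subseteq> Q \<times> Q \<and>
     (\<forall>i\<in>Q. \<forall>t \<psi>. Cnt st t \<psi> i = card {r. (t, \<psi>, r) \<in> DL \<and> (i, r) \<in> Sim st}) \<and>
     (\<forall>(s, t)\<in>Sim st - NotSim st. (s \<in> F \<longrightarrow> t \<in> F) \<and>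
        (\<forall>\<phi> i \<psi> r0. (s, \<phi>, i) \<in> Delta \<and> (t, \<psi>, r0) \<in> DL \<and>
            IsSat sem (AndF (mt_form Delta t \<psi>) (Lit True \<phi>)) \<longrightarrow>
            (\<exists>r. (t, \<psi>, r) \<in> DL \<and> (i, r) \<in> Sim st))) \<and>
     (\<forall>S. is_simulation sem Q Delta F S \<longrightarrow> S \<subseteq> Sim st - NotSim st) \<and>
     cost st + Pot (Sim st) \<le> C0"

lemma Inv_init: "Inv init"
proof -
  have cnt: "card {r. (t, \<psi>, r) \<in> DL} = card {r. (t, \<psi>, r) \<in> DL \<and> (i, r) \<in> Q \<times> Q}" if "i \<in> Q" for i t \<psi>
    proof -
    have "{r. (t, \<psi>, r) \<in> DL} = {r. (t, \<psi>, r) \<in> DL \<and> (i, r) \<in> Q \<times> Q}" using that DL_props by blast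
    then show ?thesis by simp
  qed
  show ?thesis
    unfolding Inv_def init_def C0_def
    apply (simp add: ls_init_def cnt FQ)
    apply (intro conjI)
    subgoal using FQ by blast
    subgoal by (auto dest: trans_in DL_props)
    subgoal
    proof (intro allI impI subsetI)
      fix S x assume S: "is_simulation sem Q Delta F S" and x: "x \<in> S"
      obtain a b where x': "x = (a, b)" by fastforce
      have "S \<subseteq> Q \<times> Q" "a \<in> F \<longrightarrow> b \<in> F" using S x unfolding x' is_simulation_def by auto
      then show "x \<in> Q \<times> Q - F \<times> (Q - F)" using x unfolding x' by auto
    qed
    done
qed


lemma Dom_eq: "Dom = (\<lambda>x. (fst x, fst (snd x))) ` DL"
  unfolding Dom_def by force

lemma Dom_fin: "finite Dom" unfolding Dom_eq using DL_fin by simp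

lemma decs_fin: "finite (decs j)"
proof -
  have "decs j \<subseteq> Dom" unfolding decs_def Dom_def by blast
  then show ?thesis using Dom_fin finite_subset by blast
qed

definition "Tall = (\<lambda>(d, i). (fst d, snd d, i)) ` (Dom \<times> Q)"

lemma Tall_fin: "finite Tall" unfolding Tall_def using Dom_fin finQ by simp

lemma T_sub: "T S \<subseteq> Tall"
proof
  fix x assume "x \<in> T S"
  then obtain t \<psi> i r where x: "x = (t, \<psi>, i)" "i \<in> Q" "(t, \<psi>, r) \<in> DL" unfolding T_def by blast
  then have "((t, \<psi>), i) \<in> Dom \<times> Q" unfolding Dom_def by blast
  then show "x \<in> Tall" unfolding Tall_def x by force
qed

lemma T_fin: "finite (T S)" using T_sub Tall_fin finite_subset by blast

lemma T_mono: "S1 \<subseteq> S2 \<Longrightarrow> T S1 \<subseteq> T S2" unfolding T_def by blast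

lemma finr: "finite {r. (t, \<psi>, r) \<in> DL \<and> P r}"
  by (rule finite_subset[OF _ finQ]) (use DL_props in blast)

lemma Inv_step:
  assumes inv: "Inv st" and ij: "(i, j) \<in> NotSim st"
  shows "Inv (ls_process sem qcost Delta (i, j) st)"
proof -
  define S where "S = Sim st"
  define S' where "S' = S - {(i, j)}"
  define N where "N = NotSim st"
  have NS: "N \<subseteq> S" and SQ: "S \<subseteq> Q \<times> Q"
    and cnt: "\<And>i t \<psi>. i \<in> Q \<Longrightarrow> Cnt st t \<psi> i = card {r. (t, \<psi>, r) \<in> DL \<and> (i, r) \<in> S}"
    and c4: "\<forall>(s, t)\<in>S - N. (s \<in> F \<longrightarrow> t \<in> F) \<and>
        (\<forall>\<phi> i \<psi> r0. (s, \<phi>, i) \<in> Delta \<and> (t, \<psi>, r0) \<in> DL \<and>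
            IsSat sem (AndF (mt_form Delta t \<psi>) (Lit True \<phi>)) \<longrightarrow>
            (\<exists>r. (t, \<psi>, r) \<in> DL \<and> (i, r) \<in> S))"
    and c5: "\<And>S0. is_simulation sem Q Delta F S0 \<Longrightarrow> S0 \<subseteq> S - N"
    and c6: "cost st + Pot S \<le> C0"
    using inv unfolding Inv_def S_def N_def by auto
  have ijS: "(i, j) \<in> S" using ij NS N_def by blast
  have iQ: "i \<in> Q" and jQ: "j \<in> Q" using ijS SQ by auto
  have finS: "finite S" using SQ finQ finite_subset by blast
  have cnt': "Nn st i j t \<psi> p = card {r. (t, \<psi>, r) \<in> DL \<and> (p, r) \<in> S'}" if pQ: "p \<in> Q" for t \<psi> p
  proof (cases "p = i \<and> (t, \<psi>) \<in> decs j")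
    case True
    then have tj: "(t, \<psi>, j) \<in> DL" "p = i" unfolding decs_def by auto
    have "{r. (t, \<psi>, r) \<in> DL \<and> (p, r) \<in> S'} = {r. (t, \<psi>, r) \<in> DL \<and> (p, r) \<in> S} - {j}"
      unfolding S'_def using tj by auto
    moreover have "j \<in> {r. (t, \<psi>, r) \<in> DL \<and> (p, r) \<in> S}" using tj ijS by auto
    ultimately show ?thesis using True cnt[OF pQ] finr unfolding Nn_def
      by (simp add: card_Diff_singleton)
  next
    case False
    then have "{r. (t, \<psi>, r) \<in> DL \<and> (p, r) \<in> S'} = {r. (t, \<psi>, r) \<in> DL \<and> (p, r) \<in> S}"
      unfolding S'_def decs_def by auto
    then show ?thesis using False cnt[OF pQ] unfolding Nn_def by auto
  qed
  have zero: "\<not> (\<exists>r. (t, \<psi>, r) \<in> DL \<and> (i, r) \<in> S')" if "Nn st i j t \<psi> i = 0" for t \<psi>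
    using that cnt'[OF iQ, of t \<psi>] finr[of t \<psi> "\<lambda>r. (i, r) \<in> S'"] by auto
  have newS: "newset st i j \<subseteq> S'" unfolding newset_def S'_def S_def by blast
  define h' where "h' d = (if Nn st i j (fst d) (snd d) i = 0 then W (fst d, snd d, i) else 0)" for d
  define Zd where "Zd = {d \<in> decs j. Nn st i j (fst d) (snd d) i = 0}"
  define Z where "Z = (\<lambda>d. (fst d, snd d, i)) ` Zd"
  have st1: "stepc st i j \<le> 1 + (\<Sum>d\<in>decs j. 1 + h' d)"
    unfolding stepc_def case_prod_unfold
    by (rule add_left_mono, rule sum_mono) (auto simp: h'_def W_def S_def intro!: sum_mono)
  have st2: "(\<Sum>d\<in>decs j. 1 + h' d) = card (decs j) + sum W Z"
  proof -
    have "(\<Sum>d\<in>decs j. h' d) = (\<Sum>d\<in>Zd. W (fst d, snd d, i))"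
      unfolding Zd_def h'_def by (rule sum.inter_filter[OF decs_fin, symmetric])
    also have "\<dots> = sum W Z" unfolding Z_def
      by (subst sum.reindex) (auto simp: inj_on_def)
    finally show ?thesis by (simp only: sum.distrib) simp
  qed
  have ZT: "Z \<subseteq> T S" unfolding Z_def Zd_def T_def decs_def using iQ ijS by auto
  have ZT': "Z \<inter> T S' = {}" unfolding Z_def Zd_def T_def using zero by auto
  have TT: "T S' \<subseteq> T S" unfolding S'_def by (rule T_mono) blast
  have "sum W (T S') + sum W Z = sum W (T S' \<union> Z)"
    using ZT' T_fin finite_subset[OF ZT T_fin] by (simp add: sum.union_disjoint Int_commute)
  also have "\<dots> \<le> sum W (T S)" using ZT TT T_fin by (intro sum_mono2) auto
  finally have WW: "sum W (T S') + sum W Z \<le> sum W (T S)" .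
  have g: "(\<Sum>(i, j)\<in>S. 1 + card (decs j)) = (1 + card (decs j)) + (\<Sum>(i, j)\<in>S'. 1 + card (decs j))"
    unfolding S'_def using sum.remove[OF finS ijS, of "\<lambda>(i, j). 1 + card (decs j)"] by simp
  have costok: "cost st + stepc st i j + Pot S' \<le> C0"
    using c6 st1 st2 WW g unfolding Pot_def by linarith
  have c4': "(s \<in> F \<longrightarrow> t \<in> F) \<and>
        (\<forall>\<phi> i' \<psi> r0. (s, \<phi>, i') \<in> Delta \<and> (t, \<psi>, r0) \<in> DL \<and>
            IsSat sem (AndF (mt_form Delta t \<psi>) (Lit True \<phi>)) \<longrightarrow>
            (\<exists>r. (t, \<psi>, r) \<in> DL \<and> (i', r) \<in> S'))"
    if st': "(s, t) \<in> S' - ((N - {(i, j)}) \<union> newset st i j)" for s t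
  proof -
    have old: "(s, t) \<in> S - N" using st' unfolding S'_def by auto
    have notnew: "(s, t) \<notin> newset st i j" using st' by auto
    show ?thesis
    proof (intro conjI allI impI)
      show "s \<in> F \<Longrightarrow> t \<in> F" using c4 old by auto
    next
      fix \<phi> i' \<psi> r0
      assume H: "(s, \<phi>, i') \<in> Delta \<and> (t, \<psi>, r0) \<in> DL \<and> IsSat sem (AndF (mt_form Delta t \<psi>) (Lit True \<phi>))"
      then obtain r where r: "(t, \<psi>, r) \<in> DL" "(i', r) \<in> S" using c4 old by fastforce
      show "\<exists>r. (t, \<psi>, r) \<in> DL \<and> (i', r) \<in> S'"
      proof (rule ccontr)
        assume nr: "\<not> ?thesis"
        then have eq: "i' = i" "r = j" using r unfolding S'_def by auto
        have "card {r. (t, \<psi>, r) \<in> DL \<and> (i, r) \<in> S'} = 0" using nr eq by (simp add: card_eq_0_iff)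
        then have N0: "Nn st i j t \<psi> i = 0" using cnt'[OF iQ] by simp
        have "(s, t) \<in> newset st i j"
          unfolding newset_def
          using N0 H eq r old st' unfolding decs_def S_def S'_def by auto
        then show False using notnew by blast
      qed
    qed
  qed
  have c5': "S0 \<subseteq> S' - ((N - {(i, j)}) \<union> newset st i j)" if sim: "is_simulation sem Q Delta F S0" for S0
  proof
    fix x assume xS0: "x \<in> S0"
    obtain s t where x: "x = (s, t)" by fastforce
    have xo: "(s, t) \<in> S - N" using c5[OF sim] xS0 x by auto
    have "(s, t) \<notin> newset st i j"
    proof
      assume "(s, t) \<in> newset st i j"
      then obtain \<psi> \<phi> where tj: "(t, \<psi>, j) \<in> DL" and N0: "Nn st i j t \<psi> i = 0"
        and si: "(s, \<phi>, i) \<in> Delta" and sat: "IsSat sem (AndF (mt_form Delta t \<psi>) (Lit True \<phi>))"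
        unfolding newset_def decs_def by blast
      obtain a where a: "a \<in> fsem sem (mt_form Delta t \<psi>)" "a \<in> sem \<phi>" using sat unfolding IsSat_def by auto
      have "(s, a, i) \<in> ctrans sem Delta" unfolding ctrans_def using si a by blast
      then obtain r' where r': "(t, a, r') \<in> ctrans sem Delta" "(i, r') \<in> S0"
        using sim xS0 x unfolding is_simulation_def by fastforce
      then obtain \<phi>' where ph': "(t, \<phi>', r') \<in> Delta" "a \<in> sem \<phi>'" unfolding ctrans_def by blast
      have "\<psi> \<in> minterms_at sem Delta t" using DL_props[OF tj] by blast
      then have "(t, \<psi>, r') \<in> DL" unfolding DeltaL_def IsSat_def using ph' a by auto
      moreover have "(i, r') \<in> S'" using c5[OF sim] r' ij unfolding S'_def N_def by auto
      ultimately show False using zero[OF N0] by blast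
    qed
    then show "x \<in> S' - ((N - {(i, j)}) \<union> newset st i j)" using xo ij x unfolding S'_def N_def by auto
  qed
  show ?thesis
    unfolding Inv_def proc_eq ls_state.simps
    unfolding S_def[symmetric] N_def[symmetric] S'_def[symmetric]
  proof (intro conjI)
    show "N - {(i, j)} \<union> newset st i j \<subseteq> S'" using NS newS unfolding S'_def by blast
    show "S' \<subseteq> Q \<times> Q" using SQ unfolding S'_def by blast
    show "\<forall>ia\<in>Q. \<forall>t \<psi>. Nn st i j t \<psi> ia = card {r. (t, \<psi>, r) \<in> DL \<and> (ia, r) \<in> S'}" using cnt' by blast
    show "\<forall>(s, t)\<in>S' - (N - {(i, j)} \<union> newset st i j). (s \<in> F \<longrightarrow> t \<in> F) \<and>
        (\<forall>\<phi> i \<psi> r0. (s, \<phi>, i) \<in> Delta \<and> (t, \<psi>, r0) \<in> DL \<and>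
            IsSat sem (AndF (mt_form Delta t \<psi>) (Lit True \<phi>)) \<longrightarrow>
            (\<exists>r. (t, \<psi>, r) \<in> DL \<and> (i, r) \<in> S'))" using c4' by blast
    show "\<forall>S. is_simulation sem Q Delta F S \<longrightarrow> S \<subseteq> S' - (N - {(i, j)} \<union> newset st i j)" using c5' by blast
    show "cost st + stepc st i j + Pot S' \<le> C0" by (rule costok)
  qed
qed


lemma reach_Inv: "ls_reach sem qcost Q Delta F st \<Longrightarrow> Inv st"
  unfolding ls_reach_def
proof (induction rule: rtranclp_induct)
  case base
  then show ?case using Inv_init unfolding init_def .
next
  case (step y z)
  then obtain ij where "ij \<in> NotSim y" "z = ls_process sem qcost Delta ij y" unfolding ls_step_def by blast
  then show ?case using Inv_step[OF step.IH, of "fst ij" "snd ij"] by simp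
qed

lemma Inv_cost: "Inv st \<Longrightarrow> cost st \<le> C0"
  unfolding Inv_def by linarith

lemma wf_run: "wf {(st', st). ls_reach sem qcost Q Delta F st \<and> ls_step sem qcost Delta st st'}"
proof (rule wf_subset[OF wf_measure[of "\<lambda>st. card (Sim st)"]])
  show "{(st', st). ls_reach sem qcost Q Delta F st \<and> ls_step sem qcost Delta st st'}
        \<subseteq> measure (\<lambda>st. card (Sim st))"
  proof clarify
    fix st' st
    assume r: "ls_reach sem qcost Q Delta F st" and s: "ls_step sem qcost Delta st st'"
    have inv: "Inv st" using reach_Inv[OF r] .
    obtain i j where ij: "(i, j) \<in> NotSim st" "st' = ls_process sem qcost Delta (i, j) st"
      using s unfolding ls_step_def by force
    have "NotSim st \<subseteq> Sim st" "Sim st \<subseteq> Q \<times> Q" using inv unfolding Inv_def by auto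
    then have "(i, j) \<in> Sim st" "finite (Sim st)" using ij finQ by (auto intro: finite_subset)
    then have "card (Sim st - {(i, j)}) < card (Sim st)" by (metis card_Diff1_less)
    then show "(st', st) \<in> measure (\<lambda>st. card (Sim st))" using ij by (simp add: proc_eq)
  qed
qed

lemma Inv_correct:
  assumes inv: "Inv st" and emp: "NotSim st = {}"
  shows "Sim st = max_sim sem Q Delta F"
proof -
  define S where "S = Sim st"
  have SQ: "S \<subseteq> Q \<times> Q"
    and c4: "\<forall>(s, t)\<in>S. (s \<in> F \<longrightarrow> t \<in> F) \<and>
        (\<forall>\<phi> i \<psi> r0. (s, \<phi>, i) \<in> Delta \<and> (t, \<psi>, r0) \<in> DL \<and>
            IsSat sem (AndF (mt_form Delta t \<psi>) (Lit True \<phi>)) \<longrightarrow>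
            (\<exists>r. (t, \<psi>, r) \<in> DL \<and> (i, r) \<in> S))"
    and c5: "\<And>S0. is_simulation sem Q Delta F S0 \<Longrightarrow> S0 \<subseteq> S"
    using inv emp unfolding Inv_def S_def by auto
  have sim: "is_simulation sem Q Delta F S"
    unfolding is_simulation_def
  proof (intro conjI SQ ballI, clarify, intro conjI allI impI)
    fix p r assume pr: "(p, r) \<in> S"
    then show "p \<in> F \<Longrightarrow> r \<in> F" using c4 by auto
    fix a p' assume "(p, a, p') \<in> ctrans sem Delta"
    then obtain \<phi> where ph: "(p, \<phi>, p') \<in> Delta" "a \<in> sem \<phi>" unfolding ctrans_def by blast
    have rQ: "r \<in> Q" using pr SQ by auto
    define \<psi> where "\<psi> = {\<phi>' \<in> Pout Delta r. a \<in> sem \<phi>'}"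
    have amt: "a \<in> fsem sem (mt_form Delta r \<psi>)" using mt_sem[OF rQ] unfolding \<psi>_def by auto
    obtain p'' where "(r, a, p'') \<in> ctrans sem Delta" using compl rQ unfolding complete_sfa_def by blast
    then obtain \<phi>'' where ph'': "(r, \<phi>'', p'') \<in> Delta" "a \<in> sem \<phi>''" unfolding ctrans_def by blast
    have "\<psi> \<in> minterms_at sem Delta r" unfolding minterms_at_def IsSat_def \<psi>_def using amt \<psi>_def by auto
    then have "(r, \<psi>, p'') \<in> DL" unfolding DeltaL_def IsSat_def using ph'' amt by auto
    moreover have "IsSat sem (AndF (mt_form Delta r \<psi>) (Lit True \<phi>))" unfolding IsSat_def using amt ph by auto
    ultimately obtain r' where r': "(r, \<psi>, r') \<in> DL" "(p', r') \<in> S" using c4 pr ph by fast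
    then obtain \<phi>' b where ph': "(r, \<phi>', r') \<in> Delta" "b \<in> fsem sem (mt_form Delta r \<psi>)" "b \<in> sem \<phi>'"
      unfolding DeltaL_def IsSat_def by auto
    have "\<phi>' \<in> Pout Delta r" using ph' unfolding Pout_def by blast
    then have "\<phi>' \<in> \<psi>" using ph'(2,3) mt_sem[OF rQ] by auto
    then have "a \<in> sem \<phi>'" unfolding \<psi>_def by auto
    then show "\<exists>r'. (r, a, r') \<in> ctrans sem Delta \<and> (p', r') \<in> S"
      using ph' r' unfolding ctrans_def by blast
  qed
  show ?thesis unfolding max_sim_def S_def[symmetric]
    by (rule the_equality[symmetric]) (use sim c5 in blast)+
qed


abbreviation "md q \<equiv> out_deg Delta q"
definition "Ap = (\<Sum>q\<in>Q. md q * 2 ^ md q)"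
definition "Bs = (\<Sum>q\<in>Q. (2::nat) ^ md q)"

lemma m_sum: "card Delta = (\<Sum>q\<in>Q. md q)"
proof -
  have "card Delta = (\<Sum>x\<in>Delta. 1)" by simp
  also have "\<dots> = (\<Sum>q\<in>Q. \<Sum>x\<in>{x. x \<in> Delta \<and> fst x = q}. 1)"
    by (rule sum.group[symmetric, OF finD finQ]) (use trans_in in force)
  finally show ?thesis unfolding out_deg_def by simp
qed

lemma md_le: "md q \<le> card Delta"
  unfolding out_deg_def by (rule card_mono[OF finD]) auto

lemma Ap_mB: "Ap \<le> card Delta * Bs"
  unfolding Ap_def Bs_def sum_distrib_left by (rule sum_mono) (simp add: md_le)

lemma mB: "card Delta * Bs \<le> 2 * card Q * Ap"
proof -
  have "card Delta * Bs = (\<Sum>p\<in>Q. \<Sum>q\<in>Q. md p * 2 ^ md q)"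
    unfolding m_sum Bs_def sum_product ..
  also have "\<dots> \<le> (\<Sum>p\<in>Q. \<Sum>q\<in>Q. md p * 2 ^ md p + md q * 2 ^ md q)"
  proof (intro sum_mono)
    fix p q
    show "md p * 2 ^ md q \<le> md p * 2 ^ md p + md q * 2 ^ md q"
    proof (cases "md p \<le> md q")
      case True
      then have "md p * 2 ^ md q \<le> md q * 2 ^ md q" by (rule mult_right_mono) simp
      then show ?thesis by linarith
    next
      case False
      then have "(2::nat) ^ md q \<le> 2 ^ md p" by (intro power_increasing) auto
      then have "md p * 2 ^ md q \<le> md p * 2 ^ md p" by (rule mult_left_mono) simp
      then show ?thesis by linarith
    qed
  qed
  also have "\<dots> = 2 * card Q * Ap" unfolding Ap_def by (simp add: sum.distrib sum_distrib_left[symmetric])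
  finally show ?thesis .
qed

lemma n_B: "card Q \<le> Bs"
proof -
  have "card Q = (\<Sum>q\<in>Q. 1)" by simp
  also have "\<dots> \<le> Bs" unfolding Bs_def by (rule sum_mono) simp
  finally show ?thesis .
qed

lemma B_A: "Bs \<le> Ap"
  unfolding Bs_def Ap_def by (rule sum_mono) (use outdeg_pos in simp)

lemma A_nA: "Ap \<le> card Q * Ap"
  unfolding Ap_def by (cases "Q = {}") (auto simp: finQ Suc_le_eq card_gt_0_iff)

lemma B_mB: "Bs \<le> card Delta * Bs"
proof (cases "Q = {}")
  case True then have "Bs = 0" unfolding Bs_def by simp
  then show ?thesis by simp
next
  case False
  then obtain q where "q \<in> Q" by blast
  then have "1 \<le> card Delta" using outdeg_pos[of q] md_le[of q] by linarith
  then show ?thesis by simp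
qed

lemma DL_card: "card DL \<le> Ap"
proof -
  define f where "f = (\<lambda>(x :: 'q \<times> 'p \<times> 'q, \<Phi> :: 'p set). (fst x, \<Phi>, snd (snd x)))"
  define SG where "SG = (SIGMA x:Delta. Pow (Pout Delta (fst x)))"
  have finSG: "finite SG" unfolding SG_def using finD Pout_fin by auto
  have "DL \<subseteq> f ` SG"
  proof
    fix y assume y: "y \<in> DL"
    then obtain p \<Phi> q where yy: "y = (p, \<Phi>, q)" by (cases y) auto
    then obtain \<phi> where "(p, \<phi>, q) \<in> Delta" using y unfolding DeltaL_def by blast
    moreover have "\<Phi> \<subseteq> Pout Delta p" using DL_props y yy by blast
    ultimately have "((p, \<phi>, q), \<Phi>) \<in> SG" unfolding SG_def by auto
    then show "y \<in> f ` SG" unfolding yy f_def by force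
  qed
  then have "card DL \<le> card (f ` SG)" by (intro card_mono) (use finSG in auto)
  also have "\<dots> \<le> card SG" using finSG by (rule card_image_le)
  also have "\<dots> = (\<Sum>x\<in>Delta. 2 ^ card (Pout Delta (fst x)))"
    unfolding SG_def using finD Pout_fin by (simp add: card_Pow)
  also have "\<dots> \<le> (\<Sum>x\<in>Delta. 2 ^ md (fst x))"
    by (intro sum_mono power_increasing Pout_card) auto
  also have "\<dots> = (\<Sum>q\<in>Q. \<Sum>x\<in>{x. x \<in> Delta \<and> fst x = q}. 2 ^ md (fst x))"
    by (rule sum.group[symmetric, OF finD finQ]) (use trans_in in force)
  also have "\<dots> = (\<Sum>q\<in>Q. \<Sum>x\<in>{x. x \<in> Delta \<and> fst x = q}. 2 ^ md q)"
    by (intro sum.cong) auto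
  also have "\<dots> = Ap" unfolding Ap_def out_deg_def by simp
  finally show ?thesis .
qed

lemma Dom_card: "card Dom \<le> Bs"
proof -
  have "Dom \<subseteq> (SIGMA q:Q. Pow (Pout Delta q))" unfolding Dom_def using DL_props by blast
  then have "card Dom \<le> card (SIGMA q:Q. Pow (Pout Delta q))"
    by (intro card_mono) (use finQ Pout_fin in auto)
  also have "\<dots> = (\<Sum>q\<in>Q. 2 ^ card (Pout Delta q))" using finQ Pout_fin by (simp add: card_Pow)
  also have "\<dots> \<le> Bs" unfolding Bs_def by (intro sum_mono power_increasing Pout_card) auto
  finally show ?thesis .
qed

lemma DL_ends: "x \<in> DL \<Longrightarrow> fst x \<in> Q \<and> snd (snd x) \<in> Q"
  using DL_props by (cases x) auto

lemma Pot1: "(\<Sum>(i, j)\<in>Q \<times> Q. 1 + card (decs j)) \<le> card Q * card Q + card Q * card DL"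
proof -
  have dj: "card (decs j) \<le> card {x \<in> DL. snd (snd x) = j}" for j
  proof -
    have "decs j = (\<lambda>x. (fst x, fst (snd x))) ` {x \<in> DL. snd (snd x) = j}" unfolding decs_def by force
    have "finite {x \<in> DL. snd (snd x) = j}" using DL_fin by simp
    then show ?thesis unfolding \<open>decs j = _\<close> by (rule card_image_le)
  qed
  have "(\<Sum>j\<in>Q. card (decs j)) \<le> (\<Sum>j\<in>Q. card {x \<in> DL. snd (snd x) = j})" by (intro sum_mono dj)
  also have "\<dots> = (\<Sum>j\<in>Q. \<Sum>x\<in>{x. x \<in> DL \<and> snd (snd x) = j}. 1)" by simp
  also have "\<dots> = (\<Sum>x\<in>DL. 1)"
    by (rule sum.group[OF DL_fin finQ]) (use DL_ends in blast)
  finally have sj: "(\<Sum>j\<in>Q. card (decs j)) \<le> card DL" by simp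
  have "(\<Sum>(i, j)\<in>Q \<times> Q. 1 + card (decs j)) = (\<Sum>i\<in>Q. \<Sum>j\<in>Q. 1 + card (decs j))"
    by (rule sum.cartesian_product[symmetric])
  also have "\<dots> = card Q * (card Q + (\<Sum>j\<in>Q. card (decs j)))"
    by (simp only: sum.distrib sum_constant) (simp add: algebra_simps)
  also have "\<dots> \<le> card Q * (card Q + card DL)" using sj by (intro mult_left_mono) auto
  finally show ?thesis by (simp add: algebra_simps)
qed

lemma Pot2:
  assumes Hk: "\<forall>t\<in>Q. \<forall>\<Phi>. \<forall>\<phi>\<in>Pr. qcost (AndF (mt_form Delta t \<Phi>) (Lit True \<phi>)) \<le> K"
  shows "sum W (T (Q \<times> Q)) \<le> card Dom * (card Delta * (1 + K))"
proof -
  define g where "g = (\<lambda>(d :: 'q \<times> 'p set, i :: 'q). (fst d, snd d, i))"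
  have "sum W (T (Q \<times> Q)) \<le> sum W Tall" using T_sub Tall_fin by (intro sum_mono2) auto
  also have "\<dots> = (\<Sum>x\<in>Dom \<times> Q. W (g x))" unfolding Tall_def g_def[symmetric]
    by (subst sum.reindex) (auto simp: inj_on_def g_def)
  also have "\<dots> = (\<Sum>d\<in>Dom. \<Sum>i\<in>Q. W (g (d, i)))" by (subst sum.cartesian_product) (simp add: case_prod_unfold)
  also have "\<dots> \<le> (\<Sum>d\<in>Dom. card Delta * (1 + K))"
  proof (rule sum_mono)
    fix d assume d: "d \<in> Dom"
    then have tQ: "fst d \<in> Q" unfolding Dom_def using DL_props by auto
    have "(\<Sum>i\<in>Q. W (g (d, i))) = (\<Sum>i\<in>Q. \<Sum>x\<in>{x. x \<in> Delta \<and> snd (snd x) = i}.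
          1 + qcost (AndF (mt_form Delta (fst d) (snd d)) (Lit True (fst (snd x)))))"
      unfolding W_def g_def by simp
    also have "\<dots> = (\<Sum>x\<in>Delta. 1 + qcost (AndF (mt_form Delta (fst d) (snd d)) (Lit True (fst (snd x)))))"
      by (rule sum.group[OF finD finQ]) (use trans_in in force)
    also have "\<dots> \<le> of_nat (card Delta) * (1 + K)"
      by (rule sum_bounded_above) (use Hk tQ in \<open>auto simp: Pr_def\<close>)
    finally show "(\<Sum>i\<in>Q. W (g (d, i))) \<le> card Delta * (1 + K)" by simp
  qed
  also have "\<dots> = card Dom * (card Delta * (1 + K))" by simp
  finally show ?thesis .
qed


lemma step1_bd:
  assumes Hk1: "\<forall>t\<in>Q. \<forall>\<Phi>. qcost (mt_form Delta t \<Phi>) \<le> K"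
    and Hk2: "\<forall>t\<in>Q. \<forall>\<Phi>. \<forall>\<phi>\<in>Pr. qcost (AndF (mt_form Delta t \<Phi>) (Lit True \<phi>)) \<le> K"
  shows "step1_cost sem qcost Q Delta \<le> 2 * Ap + K * Bs + K * Ap"
proof -
  have per: "(\<Sum>Phi'\<in>Pow (Pout Delta q). card (Pout Delta q) + qcost (mt_form Delta q Phi'))
      + (\<Sum>t\<in>{t \<in> Delta. fst t = q}. \<Sum>Phi'\<in>minterms_at sem Delta q.
             1 + qcost (AndF (mt_form Delta q Phi') (Lit True (fst (snd t)))))
      \<le> 2 * (md q * 2 ^ md q) + K * 2 ^ md q + K * (md q * 2 ^ md q)" if qQ: "q \<in> Q" for q
  proof -
    have pw: "card (Pow (Pout Delta q)) \<le> 2 ^ md q"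
      using Pout_fin Pout_card by (simp add: card_Pow power_increasing)
    have "(\<Sum>Phi'\<in>Pow (Pout Delta q). card (Pout Delta q) + qcost (mt_form Delta q Phi'))
        \<le> of_nat (card (Pow (Pout Delta q))) * (md q + K)"
      by (rule sum_bounded_above) (use Pout_card Hk1 qQ in \<open>auto intro: add_mono\<close>)
    also have "\<dots> \<le> 2 ^ md q * (md q + K)" using pw by (simp add: mult_right_mono)
    finally have a: "(\<Sum>Phi'\<in>Pow (Pout Delta q). card (Pout Delta q) + qcost (mt_form Delta q Phi'))
        \<le> 2 ^ md q * (md q + K)" .
    have mi: "card (minterms_at sem Delta q) \<le> 2 ^ md q"
    proof -
      have "minterms_at sem Delta q \<subseteq> Pow (Pout Delta q)" unfolding minterms_at_def by auto
      then have "card (minterms_at sem Delta q) \<le> card (Pow (Pout Delta q))"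
        by (intro card_mono) (use Pout_fin in auto)
      then show ?thesis using pw by linarith
    qed
    have inner: "(\<Sum>Phi'\<in>minterms_at sem Delta q.
             1 + qcost (AndF (mt_form Delta q Phi') (Lit True (fst (snd t))))) \<le> 2 ^ md q * (1 + K)"
      if t: "t \<in> {t \<in> Delta. fst t = q}" for t
    proof -
      have "fst (snd t) \<in> Pr" using t unfolding Pr_def by auto
      then have "(\<Sum>Phi'\<in>minterms_at sem Delta q.
             1 + qcost (AndF (mt_form Delta q Phi') (Lit True (fst (snd t))))) \<le>
             of_nat (card (minterms_at sem Delta q)) * (1 + K)"
        by (intro sum_bounded_above) (use Hk2 qQ in auto)
      also have "\<dots> \<le> 2 ^ md q * (1 + K)" by (rule mult_right_mono) (use mi in simp_all)
      finally show ?thesis .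
    qed
    have "(\<Sum>t\<in>{t \<in> Delta. fst t = q}. \<Sum>Phi'\<in>minterms_at sem Delta q.
             1 + qcost (AndF (mt_form Delta q Phi') (Lit True (fst (snd t)))))
          \<le> of_nat (card {t \<in> Delta. fst t = q}) * (2 ^ md q * (1 + K))"
      by (rule sum_bounded_above) (rule inner)
    also have "\<dots> = md q * (2 ^ md q * (1 + K))" unfolding out_deg_def by simp
    finally have b: "(\<Sum>t\<in>{t \<in> Delta. fst t = q}. \<Sum>Phi'\<in>minterms_at sem Delta q.
             1 + qcost (AndF (mt_form Delta q Phi') (Lit True (fst (snd t)))))
          \<le> md q * (2 ^ md q * (1 + K))" .
    have "2 ^ md q * (md q + K) + md q * (2 ^ md q * (1 + K)) =
          2 * (md q * 2 ^ md q) + K * 2 ^ md q + K * (md q * 2 ^ md q)"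
      by (simp add: algebra_simps)
    then show ?thesis using a b by linarith
  qed
  have "step1_cost sem qcost Q Delta \<le>
        (\<Sum>q\<in>Q. 2 * (md q * 2 ^ md q) + K * 2 ^ md q + K * (md q * 2 ^ md q))"
    unfolding step1_cost_def by (rule sum_mono) (rule per)
  also have "\<dots> = 2 * Ap + K * Bs + K * Ap"
    unfolding Ap_def Bs_def by (simp add: sum.distrib sum_distrib_left)
  finally show ?thesis .
qed

lemma C0_bd:
  assumes Hk1: "\<forall>t\<in>Q. \<forall>\<Phi>. qcost (mt_form Delta t \<Phi>) \<le> K"
    and Hk2: "\<forall>t\<in>Q. \<forall>\<Phi>. \<forall>\<phi>\<in>Pr. qcost (AndF (mt_form Delta t \<Phi>) (Lit True \<phi>)) \<le> K"
  shows "C0 \<le> 20 * (card Q * Ap + card Delta * K * Bs)"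
proof -
  define n where "n = card Q"
  define m where "m = card Delta"
  define X where "X = n * Ap"
  define Y where "Y = m * K * Bs"
  have s1: "step1_cost sem qcost Q Delta \<le> 2 * Ap + K * Bs + K * Ap" by (rule step1_bd[OF Hk1 Hk2])
  have AX: "Ap \<le> X" unfolding X_def n_def by (rule A_nA)
  have KA: "K * Ap \<le> Y" unfolding Y_def m_def using Ap_mB by (simp add: mult_left_mono algebra_simps)
  have KB: "K * Bs \<le> Y" unfolding Y_def m_def using B_mB
    by (metis mult.assoc mult.commute mult_le_mono2)
  have nB: "n \<le> Bs" unfolding n_def by (rule n_B)
  have nBX: "n * Bs \<le> X" unfolding X_def using B_A by (simp add: mult_left_mono)
  have nnX: "n * n \<le> X" using nB nBX by (meson dual_order.trans mult_le_mono2)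
  have dl: "card DL \<le> Ap" by (rule DL_card)
  have nD: "n * card Dom \<le> X" using Dom_card nBX by (meson dual_order.trans mult_le_mono2)
  have FF: "card (F \<times> (Q - F)) \<le> n * n"
  proof -
    have "card (F \<times> (Q - F)) \<le> card (Q \<times> Q)" using FQ finQ by (intro card_mono) auto
    then show ?thesis unfolding n_def by (simp add: card_cartesian_product)
  qed
  have P1: "(\<Sum>(i, j)\<in>Q \<times> Q. 1 + card (decs j)) \<le> 2 * X"
  proof -
    have "n * card DL \<le> X" unfolding X_def using dl by (simp add: mult_left_mono)
    then show ?thesis using Pot1 nnX unfolding n_def by linarith
  qed
  have P2: "sum W (T (Q \<times> Q)) \<le> 2 * X + Y"
  proof -
    have "sum W (T (Q \<times> Q)) \<le> card Dom * (m * (1 + K))" unfolding m_def by (rule Pot2[OF Hk2])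
    also have "\<dots> \<le> Bs * (m * (1 + K))" using Dom_card by (rule mult_right_mono) simp
    also have "\<dots> = m * Bs + Y" unfolding Y_def by (simp add: algebra_simps)
    also have "m * Bs \<le> 2 * X" using mB unfolding m_def X_def n_def by simp
    finally show ?thesis by simp
  qed
  have Deq: "{(q, \<psi>). \<exists>t. (q, \<psi>, t) \<in> DL} = Dom" unfolding Dom_def by simp
  have ci: "cost init = step1_cost sem qcost Q Delta + (card DL + n * card Dom) + (n * n + card (F \<times> (Q - F)))"
    unfolding init_def ls_init_def n_def Deq by simp
  have c1: "cost init \<le> 6 * X + 2 * Y" using ci s1 AX KA KB nnX dl nD FF by linarith
  have "C0 \<le> 20 * (X + Y)"
  proof -
    have "C0 \<le> (6 * X + 2 * Y) + (2 * X + (2 * X + Y))"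
      unfolding C0_def Pot_def by (intro add_mono c1 P1 P2)
    then show ?thesis by (rule order.trans) simp
  qed
  then show ?thesis unfolding X_def Y_def n_def m_def .
qed


end

theorem lemma4:
  "\<exists>c::nat. \<forall>(sem :: 'p \<Rightarrow> 'd set) (sz :: 'p \<Rightarrow> nat) (qcost :: 'p bform \<Rightarrow> nat)
      (Q :: 'q set) (Delta :: ('q \<times> 'p \<times> 'q) set) (I :: 'q set) (F :: 'q set).
    sfa sem Q Delta I F \<and> complete_sfa sem Q Delta \<longrightarrow>
    (let n = card Q; m = card Delta;
         k = Max (insert 0 (sz ` {\<phi>. \<exists>p q. (p, \<phi>, q) \<in> Delta}));
         mhat = Max (insert 0 (out_deg Delta ` Q))
     in wf {(st', st). ls_reach sem qcost Q Delta F st \<and> ls_step sem qcost Delta st st'} \<and>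
        (\<forall>st. ls_reach sem qcost Q Delta F st \<longrightarrow>
           (NotSim st = {} \<longrightarrow> Sim st = max_sim sem Q Delta F) \<and>
           enat (cost st) \<le> enat c * (enat (n * (\<Sum>q\<in>Q. out_deg Delta q * 2 ^ out_deg Delta q))
                  + enat m * Csat sz qcost mhat k * enat (\<Sum>q\<in>Q. 2 ^ out_deg Delta q))))"
proof (rule exI[of _ 20], intro allI impI)
  fix sem :: "'p \<Rightarrow> 'd set" and sz :: "'p \<Rightarrow> nat" and qcost :: "'p bform \<Rightarrow> nat"
    and Q :: "'q set" and Delta :: "('q \<times> 'p \<times> 'q) set" and I F :: "'q set"
  assume H: "sfa sem Q Delta I F \<and> complete_sfa sem Q Delta"
  interpret L: lsim sem qcost Q Delta I F using H by unfold_locales auto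
  define k where "k = Max (insert 0 (sz ` {\<phi>. \<exists>p q. (p, \<phi>, q) \<in> Delta}))"
  define mhat where "mhat = Max (insert 0 (out_deg Delta ` Q))"
  define CS where "CS = Csat sz qcost mhat k"
  have PrEq: "{\<phi>. \<exists>p q. (p, \<phi>, q) \<in> Delta} = L.Pr" unfolding L.Pr_def by force
  have kb: "sz \<phi> \<le> k" if "\<phi> \<in> L.Pr" for \<phi>
    unfolding k_def PrEq using that L.Pr_fin by (intro Max_ge) auto
  have mb: "out_deg Delta t \<le> mhat" if "t \<in> Q" for t
    unfolding mhat_def using that L.finQ by (intro Max_ge) auto
  have inCS: "enat (qcost f) \<le> CS" if "nops f \<le> mhat" "\<forall>p\<in>batoms f. sz p \<le> k" for f
    unfolding CS_def Csat_def by (rule SUP_upper) (use that in auto)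
  have bound: "enat (cost st) \<le> enat 20 * (enat (card Q * L.Ap) + enat (card Delta) * CS * enat L.Bs)"
    if inv: "L.Inv st" for st
  proof -
    have cst: "cost st \<le> L.C0" using L.Inv_cost[OF inv] .
    show ?thesis
    proof (cases "\<exists>K. CS = enat K")
      case True
      then obtain K where K: "CS = enat K" by blast
      have Hk1: "\<forall>t\<in>Q. \<forall>\<Phi>. qcost (mt_form Delta t \<Phi>) \<le> K"
      proof (intro ballI allI)
        fix t \<Phi> assume t: "t \<in> Q"
        have "nops (mt_form Delta t \<Phi>) \<le> mhat"
          using L.mt_nops[OF t, of \<Phi>] L.Pout_card[of t] mb[OF t] by linarith
        moreover have "\<forall>p\<in>batoms (mt_form Delta t \<Phi>). sz p \<le> k"
          using L.mt_atoms[OF t] L.Pout_Pr kb by blast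
        ultimately show "qcost (mt_form Delta t \<Phi>) \<le> K" using inCS K by fastforce
      qed
      have Hk2: "\<forall>t\<in>Q. \<forall>\<Phi>. \<forall>\<phi>\<in>L.Pr. qcost (AndF (mt_form Delta t \<Phi>) (Lit True \<phi>)) \<le> K"
      proof (intro ballI allI)
        fix t \<Phi> \<phi> assume t: "t \<in> Q" and ph: "\<phi> \<in> L.Pr"
        have "card (Pout Delta t) \<noteq> 0" using L.Pout_ne[OF t] L.Pout_fin by simp
        then have "nops (AndF (mt_form Delta t \<Phi>) (Lit True \<phi>)) \<le> mhat"
          using L.mt_nops[OF t, of \<Phi>] L.Pout_card[of t] mb[OF t] by simp
        moreover have "\<forall>p\<in>batoms (AndF (mt_form Delta t \<Phi>) (Lit True \<phi>)). sz p \<le> k"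
          using L.mt_atoms[OF t] L.Pout_Pr kb ph by fastforce
        ultimately show "qcost (AndF (mt_form Delta t \<Phi>) (Lit True \<phi>)) \<le> K" using inCS K by fastforce
      qed
      have "cost st \<le> 20 * (card Q * L.Ap + card Delta * K * L.Bs)"
        using cst L.C0_bd[OF Hk1 Hk2] by linarith
      then show ?thesis unfolding K by simp
    next
      case False
      then have inf: "CS = \<infinity>" by (cases CS) auto
      show ?thesis
      proof (cases "Q = {}")
        case True
        have Hk1: "\<forall>t\<in>Q. \<forall>\<Phi>. qcost (mt_form Delta t \<Phi>) \<le> 0" using True by simp
        have Hk2: "\<forall>t\<in>Q. \<forall>\<Phi>. \<forall>\<phi>\<in>L.Pr. qcost (AndF (mt_form Delta t \<Phi>) (Lit True \<phi>)) \<le> 0"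
          using True by simp
        have "cost st \<le> 0" using cst L.C0_bd[OF Hk1 Hk2] True by simp
        then show ?thesis by (simp add: zero_enat_def[symmetric])
      next
        case False
        then obtain q where q: "q \<in> Q" by blast
        have m1: "card Delta \<noteq> 0" using L.outdeg_pos[OF q] L.md_le[of q] by linarith
        have "card Q > 0" using L.finQ False by (simp add: card_gt_0_iff)
        then have b1: "L.Bs \<noteq> 0" using L.n_B by linarith
        show ?thesis using m1 b1 inf by simp
      qed
    qed
  qed
  show "let n = card Q; m = card Delta;
         k = Max (insert 0 (sz ` {\<phi>. \<exists>p q. (p, \<phi>, q) \<in> Delta}));
         mhat = Max (insert 0 (out_deg Delta ` Q))
     in wf {(st', st). ls_reach sem qcost Q Delta F st \<and> ls_step sem qcost Delta st st'} \<and>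
        (\<forall>st. ls_reach sem qcost Q Delta F st \<longrightarrow>
           (NotSim st = {} \<longrightarrow> Sim st = max_sim sem Q Delta F) \<and>
           enat (cost st) \<le> enat 20 * (enat (n * (\<Sum>q\<in>Q. out_deg Delta q * 2 ^ out_deg Delta q))
                  + enat m * Csat sz qcost mhat k * enat (\<Sum>q\<in>Q. 2 ^ out_deg Delta q)))"
    unfolding Let_def k_def[symmetric] mhat_def[symmetric] CS_def[symmetric]
      L.Ap_def[symmetric] L.Bs_def[symmetric]
    using L.wf_run L.reach_Inv L.Inv_correct bound by blast
qed

end
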